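(* Let $(\Omega_X,\mathcal{F}_X)$ and $(\Omega_y,\mathcal{F}_y)$ be measurable spaces and $\pi$ a probability measure on $(\Omega_X\times\Omega_y,\mathcal{F}_X\otimes\mathcal{F}_y)$. Let $s:\Omega_X\times\Omega_y\to\mathbb{R}$ be a measurable score function, $N\ge1$, $\alpha\in[0,1]$, and let $(X_1,y_1),\dots,(X_N,y_N),(X,y)$ be i.i.d. with law $\pi$. Let $\hat q$ be the $\lceil(1-\alpha)(N+1)\rceil$-th smallest value among $s(X_1,y_1),\dots,s(X_N,y_N)$ (with $\hat q=+\infty$ if $\lceil(1-\alpha)(N+1)\rceil>N$), and let $S^{\alpha}(x)=\{y'\in\Omega_y: s(x,y')\le\hat q\}$. Suppose the mutual information $\mathrm{MI}(X,s)$ between $X$ and $s(X,y)$ (with $(X,y)\sim\pi$) is finite, and let $\rho\in(0,1]$. Then for every $\omega_X\in\mathcal{F}_X$ with $\mathbb{P}(X\in\omega_X)>\rho$, $$\mathbb{P}\big(y\in S^{\alpha}(X)\,\big|\,X\in\omega_X\big)\ge 1-\tilde\alpha,\qquad\text{where }\tilde\alpha=\alpha+\frac{\sqrt{1-e^{-\mathrm{MI}(X,s)}}}{\rho},$$ the probability being taken jointly over the calibration data and the test point.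
   Context: Split-conformal setting: any model entering $s$ is fixed and independent of the calibration and test data; calibration points and test point are i.i.d. from $\pi$; coverage probabilities are marginalized over the calibration data. *)

theory Defs
  imports "HOL-Probability.Probability"
begin

text \<open>Rank index k = ceil((1 - alpha)(N+1)) as a natural number (it is >= 0 for alpha <= 1).\<close>
definition conf_rank :: "real \<Rightarrow> nat \<Rightarrow> nat" where
  "conf_rank \<alpha> N = nat \<lceil>(1 - \<alpha>) * (real N + 1)\<rceil>"

text \<open>Degenerate case k = 0 (only possible for alpha = 1): -infinity (empty set).\<close>
definition conf_quantile :: "real \<Rightarrow> nat \<Rightarrow> (nat \<Rightarrow> real) \<Rightarrow> ereal" where
  "conf_quantile \<alpha> N sc =
     (let k = conf_rank \<alpha> N in
      if k > N then \<infinity>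
      else if k = 0 then -\<infinity>
      else ereal (sort (map sc [0..<N]) ! (k - 1)))"

definition conf_set :: "('x \<times> 'y \<Rightarrow> real) \<Rightarrow> 'y measure \<Rightarrow> real \<Rightarrow> nat \<Rightarrow>
    (nat \<Rightarrow> 'x \<times> 'y) \<Rightarrow> 'x \<Rightarrow> 'y set" where
  "conf_set s MY \<alpha> N z x =
     {y' \<in> space MY. ereal (s (x, y')) \<le> conf_quantile \<alpha> N (\<lambda>i. s (z i))}"

text \<open>Finiteness of the mutual information MI(X,Y) (as in the library lemma
  mutual_information_indep_vars): the joint law is absolutely continuous w.r.t.
  the product of marginals and the log-density is integrable.\<close>
definition (in prob_space) finite_mutual_information ::
    "real \<Rightarrow> 'b measure \<Rightarrow> 'c measure \<Rightarrow> ('a \<Rightarrow> 'b) \<Rightarrow> ('a \<Rightarrow> 'c) \<Rightarrow> bool" where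
  "finite_mutual_information b S T X Y \<longleftrightarrow>
     absolutely_continuous (distr M S X \<Otimes>\<^sub>M distr M T Y) (distr M (S \<Otimes>\<^sub>M T) (\<lambda>x. (X x, Y x))) \<and>
     integrable (distr M (S \<Otimes>\<^sub>M T) (\<lambda>x. (X x, Y x)))
       (entropy_density b (distr M S X \<Otimes>\<^sub>M distr M T Y) (distr M (S \<Otimes>\<^sub>M T) (\<lambda>x. (X x, Y x))))"

end

theory Submission
  imports Defs
begin

lemma amgm_inf:
  fixes I a b :: real
  assumes "\<And>t. t > 0 \<Longrightarrow> I \<le> (t * a + b / t) / 2" "a \<ge> 0" "b \<ge> 0"
  shows "I \<le> sqrt (a * b)"
proof (cases "a > 0 \<and> b > 0")
  case True
  define t where "t = sqrt b / sqrt a"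
  have tp: "t > 0" using True by (simp add: t_def)
  have ra: "a / sqrt a = sqrt a" using True by (simp add: real_div_sqrt)
  have rb: "b / sqrt b = sqrt b" using True by (simp add: real_div_sqrt)
  have "t * a = sqrt b * (a / sqrt a)" by (simp add: t_def)
  also have "\<dots> = sqrt (a*b)" using ra by (simp add: real_sqrt_mult)
  finally have 1: "t * a = sqrt (a*b)" .
  have "b / t = (b / sqrt b) * sqrt a" using True by (simp add: t_def)
  also have "\<dots> = sqrt (a*b)" using rb by (simp add: real_sqrt_mult)
  finally have 2: "b / t = sqrt (a*b)" .
  show ?thesis using assms(1)[OF tp] 1 2 by simp
next
  case False
  hence ab: "a = 0 \<or> b = 0" using assms by auto
  show ?thesis
  proof (rule ccontr)
    assume "\<not> ?thesis"
    hence Ip: "I > 0" using ab by auto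
    show False
    proof (cases "a = 0")
      case True
      define t where "t = 4*b/I + 4"
      have tp: "t > 0" unfolding t_def using Ip assms(3) by (simp add: add_nonneg_pos)
      have "I \<le> (t * a + b / t) / 2" by (rule assms(1)[OF tp])
      hence 1: "I \<le> b / t / 2" using True by simp
      have "b < I * t" unfolding t_def using Ip assms(3) by (simp add: algebra_simps)
      hence "b / t < I" using tp by (simp add: divide_less_eq mult.commute)
      moreover have "b / t \<ge> 0" using assms(3) tp by simp
      hence "b / t / 2 \<le> b / t" by (simp add: field_simps)
      ultimately show False using 1 by linarith
    next
      case False
      hence b0: "b = 0" using ab by auto
      have ap: "a > 0" using False assms by auto
      have "I \<le> (I / a) * a / 2" using assms(1)[of "I/a"] b0 Ip ap by simp
      thus False using Ip ap by simp
    qed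
  qed
qed

lemma bh_alg:
  fixes a b E :: real
  assumes "0 \<le> a" "a \<le> 1" "0 \<le> b" "b \<le> 1" "0 \<le> E"
    and "E \<le> sqrt (a * b) + sqrt ((1 - a) * (1 - b))"
  shows "(a - b)^2 \<le> 1 - E^2"
proof -
  obtain x1 x2 y1 y2 where x: "x1 = sqrt a" "x2 = sqrt (1-a)" "y1 = sqrt b" "y2 = sqrt (1-b)" by blast
  have nn: "x1 \<ge> 0" "x2 \<ge> 0" "y1 \<ge> 0" "y2 \<ge> 0" using x assms by auto
  have sq: "x1^2 = a" "x2^2 = 1-a" "y1^2 = b" "y2^2 = 1-b" using x assms by auto
  have R: "sqrt (a * b) + sqrt ((1 - a) * (1 - b)) = x1*y1 + x2*y2" using x by (simp add: real_sqrt_mult)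
  have lag: "(x1*y1 + x2*y2)^2 + (x1*y2 - x2*y1)^2 = 1"
  proof -
    have "(x1*y1 + x2*y2)^2 + (x1*y2 - x2*y1)^2 = (x1^2 + x2^2) * (y1^2+y2^2)" by algebra
    thus ?thesis using sq by simp
  qed
  have ab: "a - b = (x1*y2 - x2*y1) * (x1*y2 + x2*y1)"
  proof -
    have "(x1*y2 - x2*y1) * (x1*y2 + x2*y1) = x1^2*y2^2 - x2^2*y1^2" by algebra
    also have "\<dots> = a*(1-b) - (1-a)*b" by (subst sq(1), subst sq(2), subst sq(3), subst sq(4)) (rule refl)
    also have "\<dots> = a - b" by (simp add: algebra_simps)
    finally show ?thesis by simp
  qed
  have s1: "(x1*y2 + x2*y1)^2 \<le> 1"
  proof -
    have "(x1*y2 + x2*y1)^2 + (x1*y1 - x2*y2)^2 = (x1^2 + x2^2) * (y1^2+y2^2)" by algebra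
    thus ?thesis using sq by (simp) (smt (verit) zero_le_power2)
  qed
  have "(a-b)^2 = (x1*y2 - x2*y1)^2 * (x1*y2 + x2*y1)^2" using ab by (simp add: power_mult_distrib)
  also have "\<dots> \<le> (x1*y2 - x2*y1)^2" using s1 by (simp add: mult_left_le)
  also have "\<dots> = 1 - (x1*y1 + x2*y2)^2" using lag by simp
  also have "\<dots> \<le> 1 - E^2" using assms(5,6) R by (simp add: power_mono)
  finally show ?thesis .
qed

lemma sqrt_le_1p: fixes y :: real assumes "0 \<le> y" shows "sqrt y \<le> 1 + y"
proof -
  have "0 \<le> (sqrt y - 1)^2" by simp
  also have "\<dots> = y - 2 * sqrt y + 1" using assms by (simp add: power2_eq_square algebra_simps)
  finally show ?thesis using assms by simp
qed

lemma BH_event: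
  fixes Q J :: "'a measure"
  assumes Qp: "prob_space Q" and Jp: "prob_space J" and sJ: "sets J = sets Q"
    and ac: "absolutely_continuous Q J"
    and intJ: "integrable J (entropy_density (exp 1) Q J)"
    and A: "A \<in> sets Q"
  shows "\<bar>measure J A - measure Q A\<bar> \<le> sqrt (1 - exp (- KL_divergence (exp 1) Q J))"
proof -
  interpret Q: prob_space Q by fact
  interpret J: prob_space J by fact
  define g where "g x = enn2real (RN_deriv Q J x)" for x
  define K where "K = KL_divergence (exp 1) Q J"
  have gm[measurable]: "g \<in> borel_measurable Q" unfolding g_def by measurable
  have g0: "\<And>x. g x \<ge> 0" unfolding g_def by simp
  have fin: "AE x in Q. RN_deriv Q J x \<noteq> \<infinity>"
    by (rule Q.RN_deriv_finite[OF _ ac sJ]) unfold_locales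
  have "J = density Q (RN_deriv Q J)" using Q.density_RN_deriv[OF ac sJ] by simp
  also have "\<dots> = density Q (\<lambda>x. ennreal (g x))"
    by (rule density_cong) (use fin in \<open>auto simp: g_def less_top[symmetric] intro!: ennreal_enn2real[symmetric]\<close>)
  finally have Jd: "J = density Q (\<lambda>x. ennreal (g x))" .
  have ent: "entropy_density (exp 1) Q J x = ln (g x)" for x
    by (simp add: entropy_density_def g_def log_def)
  have ent': "entropy_density (exp 1) Q J = (\<lambda>x. ln (g x))" by (rule ext) (rule ent)
  have int_g: "integrable Q g"
  proof -
    have "integrable J (\<lambda>_. 1::real)" by simp
    thus ?thesis using integrable_density[of "\<lambda>_. 1::real" Q g] Jd g0 by simp
  qed
  have int_g1: "integral\<^sup>L Q g = 1"
  proof -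
    have "integral\<^sup>L J (\<lambda>_. 1::real) = 1" by (simp add: J.prob_space)
    thus ?thesis using integral_density[of "\<lambda>_. 1::real" Q g] Jd g0 by simp
  qed
  have int_gl: "integrable Q (\<lambda>x. g x * ln (g x))"
  proof -
    have "integrable J (\<lambda>x. ln (g x))" using intJ ent' by simp
    thus ?thesis using integrable_density[of "\<lambda>x. ln (g x)" Q g] Jd g0 by simp
  qed
  have int_gl1: "integral\<^sup>L Q (\<lambda>x. g x * ln (g x)) = K"
  proof -
    have "K = integral\<^sup>L J (\<lambda>x. ln (g x))" unfolding K_def KL_divergence_def ent' ..
    thus ?thesis using integral_density[of "\<lambda>x. ln (g x)" Q g] Jd g0 by simp
  qed
  have measJ: "measure J B = integral\<^sup>L Q (\<lambda>x. g x * indicator B x)" if B: "B \<in> sets Q" for B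
  proof -
    have "measure J B = integral\<^sup>L J (indicator B)" using B sJ by (simp add: Int_absorb2 sets.sets_into_space)
    also have "\<dots> = integral\<^sup>L Q (\<lambda>x. g x * indicator B x)"
      using integral_density[of "indicator B :: _ \<Rightarrow> real" Q g] Jd B g0 by simp
    finally show ?thesis .
  qed
  have int_gB: "integrable Q (\<lambda>x. g x * indicator B x)" if B: "B \<in> sets Q" for B
    using integrable_mult_indicator[OF B int_g] by (simp add: mult.commute)
  have int_s: "integrable Q (\<lambda>x. sqrt (g x))"
    by (rule Bochner_Integration.integrable_bound[where f="\<lambda>x. 1 + g x"]) (use int_g g0 in \<open>auto intro!: AE_I2 sqrt_le_1p\<close>)
  have int_sB: "integrable Q (\<lambda>x. sqrt (g x) * indicator B x)" if B: "B \<in> sets Q" for B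
    using integrable_mult_indicator[OF B int_s] by (simp add: mult.commute)
  define BC where "BC = integral\<^sup>L Q (\<lambda>x. sqrt (g x))"
  \<comment> \<open>Jensen step\<close>
  have BC_lower: "exp (- K / 2) \<le> BC"
  proof -
    define c where "c = exp (- K / 2)"
    have pw: "g x * c * (1 - ln (g x) / 2 + K / 2) \<le> sqrt (g x)" for x
    proof (cases "g x = 0")
      case True thus ?thesis by simp
    next
      case False
      hence gp: "g x > 0" using g0[of x] by simp
      have "c * (1 - ln (g x) / 2 + K / 2) \<le> exp (- ln (g x) / 2)"
      proof -
        have "1 + (- ln (g x) / 2 + K / 2) \<le> exp (- ln (g x) / 2 + K / 2)" by (rule exp_ge_add_one_self)
        hence "c * (1 + (- ln (g x) / 2 + K / 2)) \<le> c * exp (- ln (g x) / 2 + K / 2)"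
          unfolding c_def by (rule mult_left_mono) simp
        also have "\<dots> = exp (- ln (g x) / 2)" unfolding c_def by (simp add: exp_add[symmetric])
        finally show ?thesis by (simp add: algebra_simps)
      qed
      hence "g x * (c * (1 - ln (g x) / 2 + K / 2)) \<le> g x * exp (- ln (g x) / 2)"
        using gp by (simp add: mult_left_mono)
      also have "g x * exp (- ln (g x) / 2) = sqrt (g x)"
      proof -
        have e1: "exp (ln (g x) / 2) = sqrt (g x)" using gp by (simp add: ln_sqrt[symmetric])
        have "exp (- ln (g x) / 2) = exp (- (ln (g x) / 2))" by simp
        also have "\<dots> = inverse (exp (ln (g x) / 2))" by (rule exp_minus)
        finally have e2: "exp (- ln (g x) / 2) = inverse (sqrt (g x))" using e1 by simp
        have sg: "sqrt (g x) * sqrt (g x) = g x" using gp by simp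
        have nz: "sqrt (g x) \<noteq> 0" using gp by simp
        have "g x * inverse (sqrt (g x)) = (sqrt (g x) * sqrt (g x)) * inverse (sqrt (g x))"
          using sg by simp
        also have "\<dots> = sqrt (g x) * (sqrt (g x) * inverse (sqrt (g x)))" by (rule mult.assoc)
        also have "\<dots> = sqrt (g x)" using nz by simp
        finally show ?thesis using e2 by simp
      qed
      finally show ?thesis by (simp add: mult.assoc)
    qed
    have feq: "(\<lambda>x. g x * c * (1 - ln (g x) / 2 + K / 2)) = (\<lambda>x. c * ((1 + K/2) * g x - (g x * ln (g x)) / 2))"
      by (auto simp: algebra_simps)
    have intR: "integrable Q (\<lambda>x. g x * c * (1 - ln (g x) / 2 + K / 2))"
      unfolding feq using int_g int_gl by simp
    have "integral\<^sup>L Q (\<lambda>x. g x * c * (1 - ln (g x) / 2 + K / 2)) = c * ((1 + K/2) * integral\<^sup>L Q g - integral\<^sup>L Q (\<lambda>x. g x * ln (g x)) / 2)"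
      unfolding feq using int_g int_gl by simp
    also have "\<dots> = c" using int_g1 int_gl1 by simp
    finally have "c = integral\<^sup>L Q (\<lambda>x. g x * c * (1 - ln (g x) / 2 + K / 2))" by simp
    also have "\<dots> \<le> BC" unfolding BC_def
      by (rule integral_mono[OF intR int_s pw])
    finally show ?thesis unfolding c_def .
  qed
  have piece: "integral\<^sup>L Q (\<lambda>x. sqrt (g x) * indicator B x) \<le> sqrt (measure J B * measure Q B)"
    if B: "B \<in> sets Q" for B
  proof (rule amgm_inf)
    show "measure J B \<ge> 0" "measure Q B \<ge> 0" by auto
    fix t :: real assume t: "t > 0"
    have iB: "integrable Q (indicator B :: _ \<Rightarrow> real)"
      by (rule integrable_real_indicator[OF B]) (simp add: Q.emeasure_finite less_top[symmetric])
    have pw: "sqrt (g x) * indicator B x \<le> (t * (g x * indicator B x) + indicator B x / t) / 2" for x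
    proof -
      have "0 \<le> (sqrt t * sqrt (g x) - 1 / sqrt t)^2" by simp
      also have "\<dots> = t * g x + 1 / t - 2 * sqrt (g x)"
      proof -
        have ab: "(sqrt t * sqrt (g x)) * (1 / sqrt t) = sqrt (g x)" using t by simp
        have a2: "(sqrt t * sqrt (g x))^2 = t * g x" using t g0[of x] by (simp add: power_mult_distrib)
        have b2: "(1 / sqrt t)^2 = 1 / t" using t by (simp add: power_divide)
        have "(sqrt t * sqrt (g x) - 1 / sqrt t)^2 = (sqrt t * sqrt (g x))^2 + (1 / sqrt t)^2 - 2 * ((sqrt t * sqrt (g x)) * (1 / sqrt t))"
          by (simp only: power2_diff mult.assoc)
        thus ?thesis unfolding ab a2 b2 by simp
      qed
      finally show ?thesis by (auto split: split_indicator)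
    qed
    have "integral\<^sup>L Q (\<lambda>x. sqrt (g x) * indicator B x) \<le> integral\<^sup>L Q (\<lambda>x. (t * (g x * indicator B x) + indicator B x / t) / 2)"
      by (rule integral_mono[OF int_sB[OF B] _ pw]) (use int_gB[OF B] iB in simp)
    also have "\<dots> = (t * measure J B + measure Q B / t) / 2"
      using int_gB[OF B] iB B measJ[OF B] by (simp add: Int_absorb2 sets.sets_into_space)
    finally show "integral\<^sup>L Q (\<lambda>x. sqrt (g x) * indicator B x) \<le> (t * measure J B + measure Q B / t) / 2" .
  qed
  define a where "a = measure J A"
  define b where "b = measure Q A"
  have Ac: "space Q - A \<in> sets Q" using A by auto
  have aJc: "measure J (space Q - A) = 1 - a" unfolding a_def
    using J.prob_compl[of A] A sJ by (simp add: sets_eq_imp_space_eq[OF sJ])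
  have bQc: "measure Q (space Q - A) = 1 - b" unfolding b_def using Q.prob_compl[of A] A by simp
  have split: "BC = integral\<^sup>L Q (\<lambda>x. sqrt (g x) * indicator A x) + integral\<^sup>L Q (\<lambda>x. sqrt (g x) * indicator (space Q - A) x)"
  proof -
    have "integral\<^sup>L Q (\<lambda>x. sqrt (g x) * indicator A x) + integral\<^sup>L Q (\<lambda>x. sqrt (g x) * indicator (space Q - A) x)
        = integral\<^sup>L Q (\<lambda>x. sqrt (g x) * indicator A x + sqrt (g x) * indicator (space Q - A) x)"
      using int_sB[OF A] int_sB[OF Ac] by simp
    also have "\<dots> = BC" unfolding BC_def
      by (rule Bochner_Integration.integral_cong[OF refl]) (auto split: split_indicator)
    finally show ?thesis by simp
  qed
  have BCu: "BC \<le> sqrt (a * b) + sqrt ((1 - a) * (1 - b))"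
  proof -
    have p1: "integral\<^sup>L Q (\<lambda>x. sqrt (g x) * indicator A x) \<le> sqrt (a * b)"
      using piece[OF A] unfolding a_def b_def .
    have p2: "integral\<^sup>L Q (\<lambda>x. sqrt (g x) * indicator (space Q - A) x) \<le> sqrt ((1 - a) * (1 - b))"
      using piece[OF Ac] unfolding aJc bQc .
    show ?thesis using split p1 p2 by linarith
  qed
  have BC0: "0 \<le> BC" using BC_lower by (meson exp_ge_zero order_trans)
  have "(a - b)^2 \<le> 1 - BC^2"
    by (rule bh_alg[OF _ _ _ _ BC0 BCu]) (auto simp: a_def b_def)
  also have "BC^2 \<ge> exp (- K)"
  proof -
    have "exp (- K / 2) ^ 2 \<le> BC ^ 2" using BC_lower by (simp add: power_mono)
    moreover have "exp (- K / 2) ^ 2 = exp (- K)" by (simp add: exp_double[symmetric] power2_eq_square exp_add[symmetric])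
    ultimately show ?thesis by simp
  qed
  hence "1 - BC^2 \<le> 1 - exp (- K)" by simp
  finally have "(a - b)^2 \<le> 1 - exp (- K)" .
  hence "sqrt ((a-b)^2) \<le> sqrt (1 - exp (- K))" by (rule real_sqrt_le_mono)
  thus ?thesis unfolding a_def b_def K_def by simp
qed

lemma pointwise_bound:
  fixes MX :: "'x measure" and MY :: "'y measure" and \<pi> :: "('x \<times> 'y) measure"
    and s :: "'x \<times> 'y \<Rightarrow> real"
  assumes pi_prob: "prob_space \<pi>"
    and pi_sets: "sets \<pi> = sets (MX \<Otimes>\<^sub>M MY)"
    and s_meas: "s \<in> borel_measurable (MX \<Otimes>\<^sub>M MY)"
    and MI_fin: "prob_space.finite_mutual_information \<pi> (exp 1) MX borel fst s"
    and om: "\<omega> \<in> sets MX"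
  shows "0 \<le> sqrt (1 - exp (- prob_space.mutual_information \<pi> (exp 1) MX borel fst s))"
    and "measure \<pi> {z \<in> space \<pi>. fst z \<in> \<omega>} * measure \<pi> {z \<in> space \<pi>. s z \<le> t}
     \<le> measure \<pi> {z \<in> space \<pi>. s z \<le> t \<and> fst z \<in> \<omega>}
        + sqrt (1 - exp (- prob_space.mutual_information \<pi> (exp 1) MX borel fst s))"
proof -
  interpret prob_space \<pi> by fact
  have fm: "fst \<in> measurable \<pi> MX"
    by (subst measurable_cong_sets[OF pi_sets refl]) (rule measurable_fst)
  have sm: "s \<in> borel_measurable \<pi>"
    by (subst measurable_cong_sets[OF pi_sets refl]) (rule s_meas)
  define Jm where "Jm = distr \<pi> (MX \<Otimes>\<^sub>M borel) (\<lambda>z. (fst z, s z))"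
  define Qm where "Qm = distr \<pi> MX fst \<Otimes>\<^sub>M distr \<pi> borel s"
  have pm: "(\<lambda>z. (fst z, s z)) \<in> measurable \<pi> (MX \<Otimes>\<^sub>M borel)"
    using fm sm by (rule measurable_Pair)
  interpret PX: prob_space "distr \<pi> MX fst" by (rule prob_space_distr[OF fm])
  interpret PS: prob_space "distr \<pi> borel s" by (rule prob_space_distr[OF sm])
  have Jp: "prob_space Jm" unfolding Jm_def by (rule prob_space_distr[OF pm])
  have Qp: "prob_space Qm" unfolding Qm_def by (rule prob_space_pair) unfold_locales
  have sQ: "sets Qm = sets (MX \<Otimes>\<^sub>M borel)" unfolding Qm_def
    by (rule sets_pair_measure_cong) simp_all
  have sJ: "sets Jm = sets Qm" using sQ unfolding Jm_def by simp
  have MIf: "absolutely_continuous Qm Jm" "integrable Jm (entropy_density (exp 1) Qm Jm)"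
    using MI_fin unfolding finite_mutual_information_def Jm_def Qm_def by auto
  have MI: "mutual_information (exp 1) MX borel fst s = KL_divergence (exp 1) Qm Jm"
    unfolding mutual_information_def Jm_def Qm_def ..
  define A where "A = \<omega> \<times> {..t}"
  have A: "A \<in> sets Qm" unfolding A_def sQ using om by auto
  have hb: "\<bar>measure Jm A - measure Qm A\<bar> \<le> sqrt (1 - exp (- KL_divergence (exp 1) Qm Jm))"
    by (rule BH_event[OF Qp Jp sJ MIf A])
  have hJ: "measure Jm A = measure \<pi> {z \<in> space \<pi>. s z \<le> t \<and> fst z \<in> \<omega>}"
  proof -
    have "measure Jm A = measure \<pi> ((\<lambda>z. (fst z, s z)) -` A \<inter> space \<pi>)"
      unfolding Jm_def by (rule measure_distr[OF pm]) (use A sQ in simp)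
    also have "(\<lambda>z. (fst z, s z)) -` A \<inter> space \<pi> = {z \<in> space \<pi>. s z \<le> t \<and> fst z \<in> \<omega>}"
      unfolding A_def by auto
    finally show ?thesis .
  qed
  have hQ: "measure Qm A = measure \<pi> {z \<in> space \<pi>. fst z \<in> \<omega>} * measure \<pi> {z \<in> space \<pi>. s z \<le> t}"
  proof -
    have "emeasure Qm A = emeasure (distr \<pi> MX fst) \<omega> * emeasure (distr \<pi> borel s) {..t}"
      unfolding Qm_def A_def by (rule PS.emeasure_pair_measure_Times) (use om in auto)
    also have "emeasure (distr \<pi> MX fst) \<omega> = emeasure \<pi> {z \<in> space \<pi>. fst z \<in> \<omega>}"
      by (subst emeasure_distr[OF fm om]) (auto intro!: arg_cong[where f="emeasure \<pi>"])
    also have "emeasure (distr \<pi> borel s) {..t} = emeasure \<pi> {z \<in> space \<pi>. s z \<le> t}"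
      by (subst emeasure_distr[OF sm]) (auto intro!: arg_cong[where f="emeasure \<pi>"])
    finally have "emeasure Qm A = emeasure \<pi> {z \<in> space \<pi>. fst z \<in> \<omega>} * emeasure \<pi> {z \<in> space \<pi>. s z \<le> t}" .
    thus ?thesis unfolding measure_def by (simp add: enn2real_mult)
  qed
  show "0 \<le> sqrt (1 - exp (- mutual_information (exp 1) MX borel fst s))"
    unfolding MI using hb by (meson abs_ge_zero order_trans)
  show "measure \<pi> {z \<in> space \<pi>. fst z \<in> \<omega>} * measure \<pi> {z \<in> space \<pi>. s z \<le> t}
     \<le> measure \<pi> {z \<in> space \<pi>. s z \<le> t \<and> fst z \<in> \<omega>}
        + sqrt (1 - exp (- mutual_information (exp 1) MX borel fst s))"
    unfolding MI using hb hJ hQ by (simp add: abs_le_iff)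
qed

lemma card_filter_sort:
  fixes sc :: "nat \<Rightarrow> real"
  shows "card {i \<in> {..<N}. sc i < x} = card {j. j < N \<and> sort (map sc [0..<N]) ! j < x}"
proof -
  let ?L = "sort (map sc [0..<N])"
  have "card {j. j < N \<and> ?L ! j < x} = length (filter (\<lambda>v. v < x) ?L)"
    by (simp add: length_filter_conv_card)
  also have "\<dots> = length (filter (\<lambda>v. v < x) (map sc [0..<N]))"
  proof -
    have "mset (filter (\<lambda>v. v < x) ?L) = mset (filter (\<lambda>v. v < x) (map sc [0..<N]))"
      by (simp add: mset_filter)
    thus ?thesis by (metis size_mset)
  qed
  also have "\<dots> = card {i \<in> {..<N}. sc i < x}"
  proof -
    have "{i. i < N \<and> map sc [0..<N] ! i < x} = {i \<in> {..<N}. sc i < x}" by auto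
    thus ?thesis by (simp add: length_filter_conv_card)
  qed
  finally show ?thesis by simp
qed

lemma sort_threshold:
  fixes sc :: "nat \<Rightarrow> real"
  assumes k: "1 \<le> k" "k \<le> N"
  shows "x \<le> sort (map sc [0..<N]) ! (k - 1) \<longleftrightarrow> card {i \<in> {..<N}. sc i < x} < k"
proof -
  let ?L = "sort (map sc [0..<N])"
  have len: "length ?L = N" by simp
  have srt: "sorted ?L" by simp
  have mono: "?L ! i \<le> ?L ! j" if "i \<le> j" "j < N" for i j
    using sorted_nth_mono[OF srt that(1)] that len by simp
  show ?thesis unfolding card_filter_sort
  proof
    assume x: "x \<le> ?L ! (k - 1)"
    have "{j. j < N \<and> ?L ! j < x} \<subseteq> {..<k-1}"
    proof
      fix j assume j: "j \<in> {j. j < N \<and> ?L ! j < x}"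
      show "j \<in> {..<k-1}"
      proof (rule ccontr)
        assume "j \<notin> {..<k-1}"
        hence "?L ! (k-1) \<le> ?L ! j" using j by (intro mono) auto
        thus False using j x by simp
      qed
    qed
    hence "card {j. j < N \<and> ?L ! j < x} \<le> k - 1" by (metis card_lessThan card_mono finite_lessThan)
    thus "card {j. j < N \<and> ?L ! j < x} < k" using k by simp
  next
    assume c: "card {j. j < N \<and> ?L ! j < x} < k"
    show "x \<le> ?L ! (k - 1)"
    proof (rule ccontr)
      assume nx: "\<not> x \<le> ?L ! (k - 1)"
      have "{..<k} \<subseteq> {j. j < N \<and> ?L ! j < x}"
      proof
        fix j assume "j \<in> {..<k}"
        hence j: "j \<le> k - 1" "k - 1 < N" using k by auto
        have "?L ! j \<le> ?L ! (k - 1)" by (rule mono[OF j])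
        thus "j \<in> {j. j < N \<and> ?L ! j < x}" using nx j by simp
      qed
      moreover have "finite {j. j < N \<and> ?L ! j < x}" by simp
      ultimately have "card {..<k} \<le> card {j. j < N \<and> ?L ! j < x}" by (rule card_mono[rotated])
      hence "k \<le> card {j. j < N \<and> ?L ! j < x}" by simp
      thus False using c by simp
    qed
  qed
qed

lemma many_low:
  fixes v :: "'a \<Rightarrow> real"
  assumes U: "finite U" and k: "k \<le> card U"
  shows "k \<le> card {j \<in> U. card {i \<in> U. v i < v j} < k}"
proof (rule ccontr)
  define T where "T = {j \<in> U. card {i \<in> U. v i < v j} < k}"
  assume "\<not> k \<le> card {j \<in> U. card {i \<in> U. v i < v j} < k}"
  hence cT: "card T < k" unfolding T_def by simp
  have TU: "T \<subseteq> U" unfolding T_def by auto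
  have finT: "finite T" by (rule finite_subset[OF TU U])
  have ne: "U - T \<noteq> {}"
  proof
    assume "U - T = {}"
    hence "U \<subseteq> T" by blast
    hence "card U \<le> card T" by (rule card_mono[OF finT])
    thus False using cT k by simp
  qed
  have fin: "finite (v ` (U - T))" using U by simp
  have "Min (v ` (U - T)) \<in> v ` (U - T)" using Min_in[OF fin] ne by blast
  then obtain j where j0: "Min (v ` (U - T)) = v j" and j1: "j \<in> U - T" by (rule imageE)
  have j: "j \<in> U - T" "v j = Min (v ` (U - T))" using j0 j1 by simp_all
  have "{i \<in> U. v i < v j} \<subseteq> T"
  proof
    fix i assume i: "i \<in> {i \<in> U. v i < v j}"
    show "i \<in> T"
    proof (rule ccontr)
      assume iT: "i \<notin> T"
      have "v i \<in> v ` (U - T)" using i iT by blast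
      hence "Min (v ` (U - T)) \<le> v i" by (rule Min_le[OF fin])
      hence "v j \<le> v i" using j(2) by simp
      thus False using i by simp
    qed
  qed
  hence "card {i \<in> U. v i < v j} \<le> card T" by (rule card_mono[OF finT])
  hence "card {i \<in> U. v i < v j} < k" using cT by simp
  hence "j \<in> T" using j(1) unfolding T_def by simp
  thus False using j(1) by simp
qed

lemma fubini_last:
  fixes \<pi> :: "'a measure" and N :: nat
  assumes pp: "prob_space \<pi>" and Em: "E \<in> sets (PiM {0..N} (\<lambda>_. \<pi>))"
  shows "emeasure (PiM {0..N} (\<lambda>_. \<pi>)) E = (\<integral>\<^sup>+X. (\<integral>\<^sup>+x. indicator E (X(N:=x)) \<partial>\<pi>) \<partial>(PiM {0..<N} (\<lambda>_. \<pi>)))"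
    and "(\<lambda>X. \<integral>\<^sup>+x. indicator E (X(N:=x)) \<partial>\<pi>) \<in> borel_measurable (PiM {0..<N} (\<lambda>_. \<pi>))"
proof -
  interpret prob_space \<pi> by fact
  interpret PS: product_sigma_finite "\<lambda>_. \<pi>" by unfold_locales
  have ins: "{0..N} = insert N {0..<N}" by auto
  have Em': "E \<in> sets (PiM (insert N {0..<N}) (\<lambda>_. \<pi>))" using Em ins by simp
  have im: "indicator E \<in> borel_measurable (PiM (insert N {0..<N}) (\<lambda>_. \<pi>))"
    using Em' by (rule borel_measurable_indicator)
  have "emeasure (PiM {0..N} (\<lambda>_. \<pi>)) E = (\<integral>\<^sup>+Z. indicator E Z \<partial>(PiM (insert N {0..<N}) (\<lambda>_. \<pi>)))"
    using Em' ins by simp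
  also have "\<dots> = (\<integral>\<^sup>+X. (\<integral>\<^sup>+x. indicator E (X(N:=x)) \<partial>\<pi>) \<partial>(PiM {0..<N} (\<lambda>_. \<pi>)))"
    by (rule PS.product_nn_integral_insert[OF _ _ im]) auto
  finally show "emeasure (PiM {0..N} (\<lambda>_. \<pi>)) E = (\<integral>\<^sup>+X. (\<integral>\<^sup>+x. indicator E (X(N:=x)) \<partial>\<pi>) \<partial>(PiM {0..<N} (\<lambda>_. \<pi>)))" .
  have "(\<lambda>(X, x). indicator E (X(N:=x)) :: ennreal) \<in> borel_measurable (PiM {0..<N} (\<lambda>_. \<pi>) \<Otimes>\<^sub>M \<pi>)"
    using measurable_compose[OF measurable_add_dim[of N "{0..<N}" "\<lambda>_. \<pi>"] im] by (simp add: case_prod_unfold)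
  thus "(\<lambda>X. \<integral>\<^sup>+x. indicator E (X(N:=x)) \<partial>\<pi>) \<in> borel_measurable (PiM {0..<N} (\<lambda>_. \<pi>))"
    by (rule borel_measurable_nn_integral)
qed

lemma card_as_sum:
  assumes "finite A"
  shows "real (card {i \<in> A. P i}) = (\<Sum>i\<in>A. if P i then 1 else 0)"
proof -
  have "real (card {i \<in> A. P i}) = (\<Sum>i\<in>{i \<in> A. P i}. 1)" by simp
  also have "\<dots> = (\<Sum>i\<in>A. if P i then 1 else 0)" by (rule sum.inter_filter[OF assms])
  finally show ?thesis .
qed

lemma cnt_meas:
  fixes \<pi> :: "'a measure" and s :: "'a \<Rightarrow> real" and N :: nat
  assumes sm: "s \<in> borel_measurable \<pi>" and j: "j \<in> {0..N}" and A: "A \<subseteq> {0..N}"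
  shows "(\<lambda>Z. real (card {i \<in> A. s (Z i) < s (Z j)})) \<in> borel_measurable (PiM {0..N} (\<lambda>_. \<pi>))"
proof -
  have fin: "finite A" using A by (rule finite_subset) simp
  have comp: "(\<lambda>Z. s (Z i)) \<in> borel_measurable (PiM {0..N} (\<lambda>_. \<pi>))" if "i \<in> {0..N}" for i
    using measurable_compose[OF measurable_component_singleton[OF that] sm] by simp
  have "(\<lambda>Z. \<Sum>i\<in>A. if s (Z i) < s (Z j) then 1 else 0 :: real) \<in> borel_measurable (PiM {0..N} (\<lambda>_. \<pi>))"
  proof (rule borel_measurable_sum)
    fix i assume "i \<in> A"
    hence i: "i \<in> {0..N}" using A by auto
    show "(\<lambda>Z. if s (Z i) < s (Z j) then 1 else 0 :: real) \<in> borel_measurable (PiM {0..N} (\<lambda>_. \<pi>))"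
      by (rule measurable_If) (auto intro!: borel_measurable_less comp i j)
  qed
  thus ?thesis using card_as_sum[OF fin] by simp
qed

lemma exch:
  fixes \<pi> :: "'a measure" and s :: "'a \<Rightarrow> real" and N :: nat
  assumes pp: "prob_space \<pi>" and sm: "s \<in> borel_measurable \<pi>" and k: "k \<le> N + 1"
  shows "real k \<le> real (N+1) * measure (PiM {0..N} (\<lambda>_. \<pi>))
           {Z \<in> space (PiM {0..N} (\<lambda>_. \<pi>)). card {i \<in> {0..N}. s (Z i) < s (Z N)} < k}"
proof -
  define P where "P = PiM {0..N} (\<lambda>_. \<pi>)"
  interpret P: prob_space P unfolding P_def by (rule prob_space_PiM) (rule pp)
  define Ev where "Ev j = {Z \<in> space P. real (card {i \<in> {0..N}. s (Z i) < s (Z j)}) < real k}" for j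
  have Evm: "Ev j \<in> sets P" if j: "j \<in> {0..N}" for j
  proof -
    have fm: "(\<lambda>Z. real (card {i \<in> {0..N}. s (Z i) < s (Z j)})) \<in> borel_measurable P"
      unfolding P_def by (rule cnt_meas[OF sm j]) simp
    have cm: "(\<lambda>Z. real k) \<in> borel_measurable P" by (rule measurable_const) simp
    show ?thesis unfolding Ev_def by (rule borel_measurable_less[OF fm cm])
  qed
  have same: "measure P (Ev j) = measure P (Ev N)" if j: "j \<in> {0..N}" for j
  proof -
    define \<tau> where "\<tau> i = (if i = j then N else if i = N then j else i)" for i
    have tinv: "\<tau> (\<tau> i) = i" for i unfolding \<tau>_def by auto
    have tin: "\<tau> \<in> {0..N} \<rightarrow> {0..N}" using j unfolding \<tau>_def by auto
    have tN: "\<tau> N = j" unfolding \<tau>_def by auto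
    have inj: "inj_on \<tau> {0..N}" by (metis tinv inj_on_inverseI)
    define T where "T Z = (\<lambda>n\<in>{0..N}. Z (\<tau> n))" for Z :: "nat \<Rightarrow> 'a"
    have dist: "distr P P T = P"
      using distr_PiM_reindex[of "{0..N}" "\<lambda>_. \<pi>" \<tau> "{0..N}", OF pp inj tin] unfolding P_def T_def by simp
    have Tm: "T \<in> measurable P P" unfolding P_def T_def
    proof (rule measurable_restrict)
      fix i assume "i \<in> {0..N}"
      hence "\<tau> i \<in> {0..N}" using tin by auto
      thus "(\<lambda>Z. Z (\<tau> i)) \<in> measurable (PiM {0..N} (\<lambda>_. \<pi>)) \<pi>"
        by (rule measurable_component_singleton)
    qed
    have cardeq: "card {i \<in> {0..N}. s (T Z i) < s (T Z N)} = card {i \<in> {0..N}. s (Z i) < s (Z j)}" for Z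
    proof -
      have "{i \<in> {0..N}. s (T Z i) < s (T Z N)} = \<tau> ` {i \<in> {0..N}. s (Z i) < s (Z j)}"
      proof (intro set_eqI iffI)
        fix x assume x: "x \<in> {i \<in> {0..N}. s (T Z i) < s (T Z N)}"
        hence "\<tau> x \<in> {i \<in> {0..N}. s (Z i) < s (Z j)}" using tin tN unfolding T_def by auto
        thus "x \<in> \<tau> ` {i \<in> {0..N}. s (Z i) < s (Z j)}" using tinv by (metis image_eqI)
      next
        fix x assume "x \<in> \<tau> ` {i \<in> {0..N}. s (Z i) < s (Z j)}"
        then obtain y where y: "x = \<tau> y" "y \<in> {0..N}" "s (Z y) < s (Z j)" by blast
        thus "x \<in> {i \<in> {0..N}. s (T Z i) < s (T Z N)}" using tin tN tinv unfolding T_def by auto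
      qed
      also have "card \<dots> = card {i \<in> {0..N}. s (Z i) < s (Z j)}"
        by (rule card_image, rule inj_on_subset[OF inj]) auto
      finally show ?thesis .
    qed
    have "measure P (Ev N) = measure (distr P P T) (Ev N)" using dist by simp
    also have "\<dots> = measure P (T -` Ev N \<inter> space P)" by (rule measure_distr[OF Tm Evm]) simp
    also have "T -` Ev N \<inter> space P = Ev j"
      using measurable_space[OF Tm] cardeq unfolding Ev_def by auto
    finally show ?thesis by simp
  qed
  have int: "integrable P (indicator (Ev j) :: _ \<Rightarrow> real)" if "j \<in> {0..N}" for j
    using Evm[OF that] by (intro integrable_real_indicator) (auto simp: P.emeasure_finite less_top[symmetric])
  have "real k = integral\<^sup>L P (\<lambda>_. real k)" by (simp add: P.prob_space)
  also have "\<dots> \<le> integral\<^sup>L P (\<lambda>Z. \<Sum>j\<in>{0..N}. indicator (Ev j) Z)"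
  proof (rule integral_mono)
    show "integrable P (\<lambda>_. real k)" by simp
    show "integrable P (\<lambda>Z. \<Sum>j\<in>{0..N}. indicator (Ev j) Z :: real)" using int by auto
    fix Z assume Z: "Z \<in> space P"
    have "(\<Sum>j\<in>{0..N}. indicator (Ev j) Z :: real) = (\<Sum>j\<in>{0..N}. if card {i \<in> {0..N}. s (Z i) < s (Z j)} < k then 1 else 0)"
      using Z unfolding Ev_def by (intro sum.cong) (auto split: split_indicator)
    also have "\<dots> = real (card {j \<in> {0..N}. card {i \<in> {0..N}. s (Z i) < s (Z j)} < k})"
      by (rule card_as_sum[symmetric]) simp
    finally have eq: "(\<Sum>j\<in>{0..N}. indicator (Ev j) Z :: real) = real (card {j \<in> {0..N}. card {i \<in> {0..N}. s (Z i) < s (Z j)} < k})" .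
    have "k \<le> card {j \<in> {0..N}. card {i \<in> {0..N}. (\<lambda>i. s (Z i)) i < (\<lambda>i. s (Z i)) j} < k}"
      by (rule many_low) (use k in simp_all)
    thus "real k \<le> (\<Sum>j\<in>{0..N}. indicator (Ev j) Z)" using eq by simp
  qed
  also have "\<dots> = (\<Sum>j\<in>{0..N}. measure P (Ev j))"
    using int Evm by (simp add: integral_sum Int_absorb2 sets.sets_into_space)
  also have "\<dots> = (\<Sum>j\<in>{0..N}. measure P (Ev N))" using same by (rule sum.cong[OF refl])
  also have "\<dots> = real (N+1) * measure P (Ev N)" by simp
  finally show ?thesis unfolding P_def Ev_def by simp
qed

theorem proposition2:
  fixes MX :: "'x measure" and MY :: "'y measure" and \<pi> :: "('x \<times> 'y) measure"
    and s :: "'x \<times> 'y \<Rightarrow> real" and N :: nat and \<alpha> \<rho> :: real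
  assumes pi_prob: "prob_space \<pi>"
    and pi_sets: "sets \<pi> = sets (MX \<Otimes>\<^sub>M MY)"
    and s_meas: "s \<in> borel_measurable (MX \<Otimes>\<^sub>M MY)"
    and N_pos: "N \<ge> 1"
    and alpha: "0 \<le> \<alpha>" "\<alpha> \<le> 1"
    and MI_fin: "prob_space.finite_mutual_information \<pi> (exp 1) MX borel fst s"
    and rho: "0 < \<rho>" "\<rho> \<le> 1"
  shows "\<forall>\<omega> \<in> sets MX.
     measure \<pi> {z \<in> space \<pi>. fst z \<in> \<omega>} > \<rho> \<longrightarrow>
     measure (PiM {0..N} (\<lambda>_. \<pi>))
         {Z \<in> space (PiM {0..N} (\<lambda>_. \<pi>)).
            snd (Z N) \<in> conf_set s MY \<alpha> N Z (fst (Z N)) \<and> fst (Z N) \<in> \<omega>}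
       / measure (PiM {0..N} (\<lambda>_. \<pi>)) {Z \<in> space (PiM {0..N} (\<lambda>_. \<pi>)). fst (Z N) \<in> \<omega>}
     \<ge> 1 - (\<alpha> + sqrt (1 - exp (- prob_space.mutual_information \<pi> (exp 1) MX borel fst s)) / \<rho>)"
proof (intro ballI impI)
  fix \<omega> assume om: "\<omega> \<in> sets MX" and pgt: "\<rho> < measure \<pi> {z \<in> space \<pi>. fst z \<in> \<omega>}"
  interpret prob_space \<pi> by (rule pi_prob)
  define P where "P = PiM {0..N} (\<lambda>_. \<pi>)"
  define Pc where "Pc = PiM {0..<N} (\<lambda>_. \<pi>)"
  interpret P: prob_space P unfolding P_def by (rule prob_space_PiM) (rule pi_prob)
  interpret Pc: prob_space Pc unfolding Pc_def by (rule prob_space_PiM) (rule pi_prob)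
  define p where "p = measure \<pi> {z \<in> space \<pi>. fst z \<in> \<omega>}"
  define D where "D = sqrt (1 - exp (- mutual_information (exp 1) MX borel fst s))"
  define k where "k = conf_rank \<alpha> N"
  have fm: "fst \<in> measurable \<pi> MX"
    by (subst measurable_cong_sets[OF pi_sets refl]) (rule measurable_fst)
  have sm: "s \<in> borel_measurable \<pi>"
    by (subst measurable_cong_sets[OF pi_sets refl]) (rule s_meas)
  have spi: "space \<pi> = space MX \<times> space MY"
    using sets_eq_imp_space_eq[OF pi_sets] by (simp add: space_pair_measure)
  have D0: "0 \<le> D" unfolding D_def by (rule pointwise_bound(1)[OF pi_prob pi_sets s_meas MI_fin om])
  have pw: "p * measure \<pi> {z \<in> space \<pi>. s z \<le> t} \<le> measure \<pi> {z \<in> space \<pi>. s z \<le> t \<and> fst z \<in> \<omega>} + D" for t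
    unfolding p_def D_def by (rule pointwise_bound(2)[OF pi_prob pi_sets s_meas MI_fin om])
  have pp: "0 < p" using pgt rho unfolding p_def by simp
  have ZN: "Z N \<in> space \<pi>" if "Z \<in> space P" for Z
    using that unfolding P_def by (auto simp: space_PiM PiE_iff)
  have upd: "X(N := x) \<in> space P" if "X \<in> space Pc" "x \<in> space \<pi>" for X x
    using that unfolding P_def Pc_def by (auto simp: space_PiM PiE_iff extensional_def)
  have compN: "(\<lambda>Z. Z N) \<in> measurable P \<pi>" unfolding P_def
    by (rule measurable_component_singleton) simp
  have Wpi: "{z \<in> space \<pi>. fst z \<in> \<omega>} \<in> sets \<pi>"
  proof -
    have "fst -` \<omega> \<inter> space \<pi> \<in> sets \<pi>" by (rule measurable_sets[OF fm om])
    moreover have "fst -` \<omega> \<inter> space \<pi> = {z \<in> space \<pi>. fst z \<in> \<omega>}" by blast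
    ultimately show ?thesis by simp
  qed
  define W where "W = {Z \<in> space P. fst (Z N) \<in> \<omega>}"
  have Wm: "W \<in> sets P" unfolding W_def by (rule measurable_sets_Collect[OF compN Wpi])
  have fub: "emeasure P E = (\<integral>\<^sup>+X. (\<integral>\<^sup>+x. indicator E (X(N:=x)) \<partial>\<pi>) \<partial>Pc)" if "E \<in> sets P" for E
    using fubini_last(1)[OF pi_prob, of E N] that unfolding P_def Pc_def by simp
  have fubm: "(\<lambda>X. \<integral>\<^sup>+x. indicator E (X(N:=x)) \<partial>\<pi>) \<in> borel_measurable Pc" if "E \<in> sets P" for E
    using fubini_last(2)[OF pi_prob, of E N] that unfolding P_def Pc_def by simp
  have fiber: "(\<integral>\<^sup>+x. indicator E (X(N:=x)) \<partial>\<pi>) = emeasure \<pi> {x \<in> space \<pi>. R x}"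
    if X: "X \<in> space Pc" and R: "\<And>x. x \<in> space \<pi> \<Longrightarrow> (X(N:=x) \<in> E \<longleftrightarrow> R x)"
      and Rm: "{x \<in> space \<pi>. R x} \<in> sets \<pi>" for E X R
  proof -
    have "(\<integral>\<^sup>+x. indicator E (X(N:=x)) \<partial>\<pi>) = (\<integral>\<^sup>+x. indicator {x \<in> space \<pi>. R x} x \<partial>\<pi>)"
      by (rule nn_integral_cong) (use R in \<open>auto split: split_indicator\<close>)
    also have "\<dots> = emeasure \<pi> {x \<in> space \<pi>. R x}" by (rule nn_integral_indicator[OF Rm])
    finally show ?thesis .
  qed
  have Wmeas: "measure P W = p"
  proof -
    have "emeasure P W = (\<integral>\<^sup>+X. (\<integral>\<^sup>+x. indicator W (X(N:=x)) \<partial>\<pi>) \<partial>Pc)" by (rule fub[OF Wm])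
    also have "\<dots> = (\<integral>\<^sup>+X. ennreal p \<partial>Pc)"
    proof (rule nn_integral_cong)
      fix X assume X: "X \<in> space Pc"
      have "(\<integral>\<^sup>+x. indicator W (X(N:=x)) \<partial>\<pi>) = emeasure \<pi> {x \<in> space \<pi>. fst x \<in> \<omega>}"
        by (rule fiber[OF X _ Wpi]) (use upd[OF X] in \<open>auto simp: W_def\<close>)
      also have "\<dots> = ennreal p" unfolding p_def by (rule emeasure_eq_measure)
      finally show "(\<integral>\<^sup>+x. indicator W (X(N:=x)) \<partial>\<pi>) = ennreal p" .
    qed
    also have "\<dots> = ennreal p" by (simp add: Pc.emeasure_space_1)
    finally have "emeasure P W = ennreal p" .
    thus ?thesis using pp by (simp add: P.emeasure_eq_measure)
  qed
  have Wset: "{Z \<in> space (PiM {0..N} (\<lambda>_. \<pi>)). fst (Z N) \<in> \<omega>} = W" unfolding W_def P_def ..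
  define Num where "Num = {Z \<in> space P. snd (Z N) \<in> conf_set s MY \<alpha> N Z (fst (Z N)) \<and> fst (Z N) \<in> \<omega>}"
  have Numset: "{Z \<in> space (PiM {0..N} (\<lambda>_. \<pi>)).
            snd (Z N) \<in> conf_set s MY \<alpha> N Z (fst (Z N)) \<and> fst (Z N) \<in> \<omega>} = Num" unfolding Num_def P_def ..
  have sndN: "snd (Z N) \<in> space MY" "fst (Z N) \<in> space MX" if "Z \<in> space P" for Z
  proof -
    have "Z N \<in> space MX \<times> space MY" using ZN[OF that] unfolding spi .
    thus "snd (Z N) \<in> space MY" "fst (Z N) \<in> space MX" by (simp_all add: mem_Times_iff)
  qed
  have key: "measure P Num \<ge> p * (1 - \<alpha>) - D"
  proof (cases "k > N")
    case True
    have "Num = W"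
      unfolding Num_def W_def conf_set_def conf_quantile_def using True sndN by (auto simp: k_def Let_def)
    hence "measure P Num = p" using Wmeas by simp
    thus ?thesis using pp alpha D0 by (simp add: algebra_simps)
  next
    case False
    hence kN: "k \<le> N" by simp
    show ?thesis
    proof (cases "k = 0")
      case True
      have "(1 - \<alpha>) * (real N + 1) \<le> 0" using True unfolding k_def conf_rank_def by linarith
      hence "1 - \<alpha> \<le> 0" by (simp add: mult_le_0_iff)
      hence "p * (1 - \<alpha>) \<le> 0" using pp by (simp add: mult_nonneg_nonpos)
      thus ?thesis using D0 measure_nonneg[of P Num] by linarith
    next
      case False
      hence k1: "1 \<le> k" by simp
      define thr where "thr X = sort (map (\<lambda>i. s (X i)) [0..<N]) ! (k - 1)" for X :: "nat \<Rightarrow> 'x \<times> 'y"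
      define C where "C = {Z \<in> space P. real (card {i \<in> {..<N}. s (Z i) < s (Z N)}) < real k}"
      have cq: "conf_quantile \<alpha> N (\<lambda>i. s (Z i)) = ereal (thr Z)" for Z
        unfolding conf_quantile_def thr_def using k1 kN by (simp add: k_def Let_def)
      have thr_iff: "s x \<le> thr X \<longleftrightarrow> card {i \<in> {..<N}. s (X i) < s x} < k" for X x
        unfolding thr_def by (rule sort_threshold[OF k1 kN])
      have NumC: "Num = C \<inter> W"
      proof (intro set_eqI iffI)
        fix Z assume "Z \<in> Num"
        hence Z: "Z \<in> space P" "s (Z N) \<le> thr Z" "fst (Z N) \<in> \<omega>" unfolding Num_def conf_set_def cq by auto
        thus "Z \<in> C \<inter> W" unfolding C_def W_def using thr_iff[of "Z N" Z] by simp
      next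
        fix Z assume "Z \<in> C \<inter> W"
        hence Z: "Z \<in> space P" "card {i \<in> {..<N}. s (Z i) < s (Z N)} < k" "fst (Z N) \<in> \<omega>"
          unfolding C_def W_def by auto
        hence "s (Z N) \<le> thr Z" using thr_iff[of "Z N" Z] by simp
        thus "Z \<in> Num" unfolding Num_def conf_set_def cq using Z sndN[OF Z(1)] by simp
      qed
      have Cm: "C \<in> sets P"
      proof -
        have fmc: "(\<lambda>Z. real (card {i \<in> {..<N}. s (Z i) < s (Z N)})) \<in> borel_measurable P"
          unfolding P_def by (rule cnt_meas[OF sm]) auto
        have cm: "(\<lambda>Z. real k) \<in> borel_measurable P" by (rule measurable_const) simp
        show ?thesis unfolding C_def by (rule borel_measurable_less[OF fmc cm])
      qed
      have Em: "C \<inter> W \<in> sets P" using Cm Wm by blast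
      have Cmeas: "1 - \<alpha> \<le> measure P C"
      proof -
        have kN': "k \<le> N + 1" by (rule trans_le_add1[OF kN])
        note ex0 = exch[where \<pi>=\<pi> and s=s and k=k and N=N, OF pi_prob sm kN']
        have ex: "real k \<le> real (N+1) * measure P {Z \<in> space P. card {i \<in> {0..N}. s (Z i) < s (Z N)} < k}"
          using ex0 unfolding P_def .
        have seteq: "{i \<in> {0..N}. s (Z i) < s (Z N)} = {i \<in> {..<N}. s (Z i) < s (Z N)}" for Z
        proof (rule set_eqI)
          fix i show "i \<in> {i \<in> {0..N}. s (Z i) < s (Z N)} \<longleftrightarrow> i \<in> {i \<in> {..<N}. s (Z i) < s (Z N)}"
            by (cases "i = N") auto
        qed
        have CC: "{Z \<in> space P. card {i \<in> {0..N}. s (Z i) < s (Z N)} < k} = C"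
          unfolding C_def seteq by simp
        have ex': "real k \<le> real (N+1) * measure P C" using ex unfolding CC .
        have "(1 - \<alpha>) * (real N + 1) \<le> real k"
          unfolding k_def conf_rank_def by (rule real_nat_ceiling_ge)
        moreover have "real k \<le> measure P C * (real N + 1)" using ex' by (simp add: mult.commute add.commute)
        ultimately have h: "(1 - \<alpha>) * (real N + 1) \<le> measure P C * (real N + 1)" by (rule order_trans)
        show ?thesis by (rule mult_right_le_imp_le[OF h]) simp
      qed
      have fibC: "(\<integral>\<^sup>+x. indicator C (X(N:=x)) \<partial>\<pi>) = emeasure \<pi> {x \<in> space \<pi>. s x \<le> thr X}"
        if X: "X \<in> space Pc" for X
      proof (rule fiber[OF X])
        show "{x \<in> space \<pi>. s x \<le> thr X} \<in> sets \<pi>" using sm by measurable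
        fix x assume x: "x \<in> space \<pi>"
        have "{i \<in> {..<N}. s ((X(N:=x)) i) < s ((X(N:=x)) N)} = {i \<in> {..<N}. s (X i) < s x}" by auto
        thus "X(N:=x) \<in> C \<longleftrightarrow> s x \<le> thr X" unfolding C_def using upd[OF X x] thr_iff[of x X] by simp
      qed
      have fibE: "(\<integral>\<^sup>+x. indicator (C \<inter> W) (X(N:=x)) \<partial>\<pi>) = emeasure \<pi> {x \<in> space \<pi>. s x \<le> thr X \<and> fst x \<in> \<omega>}"
        if X: "X \<in> space Pc" for X
      proof (rule fiber[OF X])
        show "{x \<in> space \<pi>. s x \<le> thr X \<and> fst x \<in> \<omega>} \<in> sets \<pi>"
        proof -
          have "{x \<in> space \<pi>. s x \<le> thr X} \<in> sets \<pi>" using sm by measurable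
          hence "{x \<in> space \<pi>. s x \<le> thr X} \<inter> {z \<in> space \<pi>. fst z \<in> \<omega>} \<in> sets \<pi>" using Wpi by blast
          moreover have "{x \<in> space \<pi>. s x \<le> thr X} \<inter> {z \<in> space \<pi>. fst z \<in> \<omega>} = {x \<in> space \<pi>. s x \<le> thr X \<and> fst x \<in> \<omega>}" by blast
          ultimately show ?thesis by simp
        qed
        fix x assume x: "x \<in> space \<pi>"
        have "{i \<in> {..<N}. s ((X(N:=x)) i) < s ((X(N:=x)) N)} = {i \<in> {..<N}. s (X i) < s x}" by auto
        thus "X(N:=x) \<in> C \<inter> W \<longleftrightarrow> s x \<le> thr X \<and> fst x \<in> \<omega>"
          unfolding C_def W_def using upd[OF X x] thr_iff[of x X] by simp
      qed
      have "ennreal p * emeasure P C = ennreal p * (\<integral>\<^sup>+X. (\<integral>\<^sup>+x. indicator C (X(N:=x)) \<partial>\<pi>) \<partial>Pc)"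
        by (simp add: fub[OF Cm])
      also have "\<dots> = (\<integral>\<^sup>+X. ennreal p * (\<integral>\<^sup>+x. indicator C (X(N:=x)) \<partial>\<pi>) \<partial>Pc)"
        by (rule nn_integral_cmult[symmetric]) (rule fubm[OF Cm])
      also have "\<dots> \<le> (\<integral>\<^sup>+X. ((\<integral>\<^sup>+x. indicator (C \<inter> W) (X(N:=x)) \<partial>\<pi>) + ennreal D) \<partial>Pc)"
      proof (rule nn_integral_mono)
        fix X assume X: "X \<in> space Pc"
        have "p * measure \<pi> {z \<in> space \<pi>. s z \<le> thr X} \<le> measure \<pi> {z \<in> space \<pi>. s z \<le> thr X \<and> fst z \<in> \<omega>} + D"
          by (rule pw)
        hence "ennreal (p * measure \<pi> {z \<in> space \<pi>. s z \<le> thr X}) \<le> ennreal (measure \<pi> {z \<in> space \<pi>. s z \<le> thr X \<and> fst z \<in> \<omega>} + D)"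
          by (rule ennreal_leI)
        thus "ennreal p * (\<integral>\<^sup>+x. indicator C (X(N:=x)) \<partial>\<pi>) \<le> (\<integral>\<^sup>+x. indicator (C \<inter> W) (X(N:=x)) \<partial>\<pi>) + ennreal D"
          unfolding fibC[OF X] fibE[OF X] using pp D0
          by (simp add: emeasure_eq_measure ennreal_mult ennreal_plus)
      qed
      also have "\<dots> = (\<integral>\<^sup>+X. (\<integral>\<^sup>+x. indicator (C \<inter> W) (X(N:=x)) \<partial>\<pi>) \<partial>Pc) + (\<integral>\<^sup>+X. ennreal D \<partial>Pc)"
        by (rule nn_integral_add) (rule fubm[OF Em], simp)
      also have "\<dots> = emeasure P (C \<inter> W) + ennreal D"
        by (simp add: fub[OF Em] Pc.emeasure_space_1)
      finally have "ennreal p * emeasure P C \<le> emeasure P (C \<inter> W) + ennreal D" .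
      hence "ennreal (p * measure P C) \<le> ennreal (measure P (C \<inter> W) + D)"
        using pp D0 by (simp add: P.emeasure_eq_measure ennreal_mult ennreal_plus)
      hence "p * measure P C \<le> measure P (C \<inter> W) + D"
        using D0 by (subst (asm) ennreal_le_iff) auto
      moreover have "p * (1 - \<alpha>) \<le> p * measure P C" using Cmeas pp by (simp add: mult_left_mono)
      ultimately show ?thesis using NumC by simp
    qed
  qed
  have "1 - (\<alpha> + D / \<rho>) \<le> 1 - (\<alpha> + D / p)"
  proof -
    have "D / p \<le> D / \<rho>" using D0 rho pgt unfolding p_def by (intro divide_left_mono) auto
    thus ?thesis by simp
  qed
  also have "1 - (\<alpha> + D / p) = (p * (1 - \<alpha>) - D) / p" using pp by (simp add: field_simps)
  also have "\<dots> \<le> measure P Num / p" using key pp by (simp add: divide_right_mono)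
  finally have "1 - (\<alpha> + D / \<rho>) \<le> measure P Num / measure P W" using Wmeas by simp
  thus "measure (PiM {0..N} (\<lambda>_. \<pi>))
         {Z \<in> space (PiM {0..N} (\<lambda>_. \<pi>)).
            snd (Z N) \<in> conf_set s MY \<alpha> N Z (fst (Z N)) \<and> fst (Z N) \<in> \<omega>}
       / measure (PiM {0..N} (\<lambda>_. \<pi>)) {Z \<in> space (PiM {0..N} (\<lambda>_. \<pi>)). fst (Z N) \<in> \<omega>}
     \<ge> 1 - (\<alpha> + sqrt (1 - exp (- mutual_information (exp 1) MX borel fst s)) / \<rho>)"
    unfolding Num_def W_def P_def D_def .
qed

end
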